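(* Let $I\subset\mathbb{R}$ be an open interval, let $\bm{a}:I\to\mathbb{R}^2_1$ be a spacelike frontal with Gauss mapping $\bm{\nu}:I\to H^1$, and let $r:I\to\mathbb{R}^+$ be a positive constant function. If $\bm{a}$ is not constant (i.e. its image is not a single point), then the pseudo-circle family $C_{(\bm{a}(t),r(t))}$ does not create an envelope.
   Context: All objects are $C^\infty$. The Minkowski plane $\mathbb{R}^2_1$ is $\mathbb{R}^2$ with $\langle\bm{x},\bm{y}\rangle=-x_1y_1+x_2y_2$; $H^1=\{\bm{x}:\langle\bm{x},\bm{x}\rangle=-1\}$. A smooth $\bm{a}:I\to\mathbb{R}^2_1$ is a spacelike frontal if there is a smooth $\bm{\nu}:I\to H^1$ (Gauss mapping) with $\langle\frac{d\bm{a}}{dt}(t),\bm{\nu}(t)\rangle=0$ for all $t$. $C_{(\bm{a}(t),r(t))}=\{\bm{x}\in\mathbb{R}^2_1:\langle\bm{x}-\bm{a}(t),\bm{x}-\bm{a}(t)\rangle=r(t)^2\}$. An envelope of $C_{(\bm{a}(t),r(t))}$ is a smooth $f:I\to\mathbb{R}^2_1$ with $f(t)\in C_{(\bm{a}(t),r(t))}$ and $\langle\frac{df}{dt}(t),f(t)-\bm{a}(t)\rangle=0$ for all $t\in I$. *)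

theory Defs
  imports "HOL-Analysis.Analysis"
begin

definition mink :: "real \<times> real \<Rightarrow> real \<times> real \<Rightarrow> real" where
  "mink x y = - fst x * fst y + snd x * snd y"

definition H1 :: "(real \<times> real) set" where
  "H1 = {x. mink x x = -1}"

definition smooth_on :: "real set \<Rightarrow> (real \<Rightarrow> 'a::real_normed_vector) \<Rightarrow> bool" where
  "smooth_on I f \<longleftrightarrow>
     (\<exists>D :: nat \<Rightarrow> real \<Rightarrow> 'a. D 0 = f \<and>
        (\<forall>n. \<forall>t\<in>I. (D n has_vector_derivative D (Suc n) t) (at t)))"

definition spacelike_frontal ::
  "real set \<Rightarrow> (real \<Rightarrow> real \<times> real) \<Rightarrow> (real \<Rightarrow> real \<times> real) \<Rightarrow> bool" where
  "spacelike_frontal I a \<nu> \<longleftrightarrow>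
     smooth_on I a \<and> smooth_on I \<nu> \<and> (\<forall>t\<in>I. \<nu> t \<in> H1) \<and>
     (\<forall>t\<in>I. mink (vector_derivative a (at t)) (\<nu> t) = 0)"

definition pseudo_circle :: "real \<times> real \<Rightarrow> real \<Rightarrow> (real \<times> real) set" where
  "pseudo_circle c \<rho> = {x. mink (x - c) (x - c) = \<rho>\<^sup>2}"

definition is_envelope ::
  "real set \<Rightarrow> (real \<Rightarrow> real \<times> real) \<Rightarrow> (real \<Rightarrow> real) \<Rightarrow> (real \<Rightarrow> real \<times> real) \<Rightarrow> bool" where
  "is_envelope I a r f \<longleftrightarrow>
     smooth_on I f \<and>
     (\<forall>t\<in>I. f t \<in> pseudo_circle (a t) (r t) \<and>
             mink (vector_derivative f (at t)) (f t - a t) = 0)"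

end

theory Submission
  imports Defs
begin

lemma mink_deriv:
  assumes "(g has_vector_derivative g') (at t)"
  shows "((\<lambda>t. mink (g t) (g t)) has_real_derivative 2 * mink g' (g t)) (at t)"
proof -
  have d: "(g has_derivative (\<lambda>h. h *\<^sub>R g')) (at t)" using assms by (simp add: has_vector_derivative_def)
  have 1: "((\<lambda>t. fst (g t)) has_real_derivative fst g') (at t)"
    using has_derivative_fst[OF d] unfolding has_field_derivative_def by (simp add: mult.commute[of _ "fst g'"] fun_eq_iff)
  have 2: "((\<lambda>t. snd (g t)) has_real_derivative snd g') (at t)"
    using has_derivative_snd[OF d] unfolding has_field_derivative_def by (simp add: mult.commute[of _ "snd g'"] fun_eq_iff)
  show ?thesis unfolding mink_def
    by (rule derivative_eq_intros 1 2 | simp)+ (simp add: algebra_simps)?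
qed
lemma alg: "-n1*n1+n2*n2 = -1 \<Longrightarrow> -x*x+y*y > (0::real) \<Longrightarrow> -p*n1+q*n2 = 0 \<Longrightarrow> -p*x+q*y=0 \<Longrightarrow> p = 0 \<and> q = 0"
proof (rule ccontr)
  assume h: "-n1*n1+n2*n2 = -1" "-x*x+y*y > (0::real)" "-p*n1+q*n2 = 0" "-p*x+q*y=0" "\<not> (p = 0 \<and> q = 0)"
  have "p * (n1*y - x*n2) = 0" using h(3,4) by algebra
  moreover have "q * (n1*y - x*n2) = 0" using h(3,4) by algebra
  ultimately have det: "n1*y - x*n2 = 0" using h(5) by auto
  have id: "(-x*x+y*y)*(-n1*n1+n2*n2) = (x*n1 - y*n2)^2 - (x*n2 - y*n1)^2" by algebra
  have "x*n2 - y*n1 = 0" using det by (simp add: mult.commute)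
  with id h(1) have "-(-x*x+y*y) = (x*n1 - y*n2)^2" by simp
  moreover have "(x*n1 - y*n2)^2 \<ge> 0" by simp
  ultimately show False using h(2) by linarith
qed

theorem proposition1:
  fixes I :: "real set" and a \<nu> :: "real \<Rightarrow> real \<times> real" and r :: "real \<Rightarrow> real"
  assumes "open I" and "is_interval I"
    and "spacelike_frontal I a \<nu>"
    and "\<exists>c>0. \<forall>t\<in>I. r t = c"
    and "\<exists>s\<in>I. \<exists>t\<in>I. a s \<noteq> a t"
  shows "\<not> (\<exists>f. is_envelope I a r f)"
proof
  assume "\<exists>f. is_envelope I a r f"
  then obtain f where env: "is_envelope I a r f" by blast
  obtain c where c: "c > 0" "\<forall>t\<in>I. r t = c" using assms(4) by blast
  obtain Df :: "nat \<Rightarrow> real \<Rightarrow> real \<times> real" where Df: "Df 0 = f"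
    "\<forall>n. \<forall>t\<in>I. (Df n has_vector_derivative Df (Suc n) t) (at t)"
    using env unfolding is_envelope_def smooth_on_def by blast
  obtain Da :: "nat \<Rightarrow> real \<Rightarrow> real \<times> real" where Da: "Da 0 = a"
    "\<forall>n. \<forall>t\<in>I. (Da n has_vector_derivative Da (Suc n) t) (at t)"
    using assms(3) unfolding spacelike_frontal_def smooth_on_def by blast
  have fd: "(f has_vector_derivative Df 1 t) (at t)" if "t \<in> I" for t
    using Df that by (metis One_nat_def)
  have ad: "(a has_vector_derivative Da 1 t) (at t)" if "t \<in> I" for t
    using Da that by (metis One_nat_def)
  have zero: "Da 1 t = 0" if t: "t \<in> I" for t
  proof -
    let ?g = "\<lambda>t. f t - a t"
    have gd: "(?g has_vector_derivative Df 1 t - Da 1 t) (at t)"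
      using fd[OF t] ad[OF t] by (rule has_vector_derivative_diff)
    have hd: "((\<lambda>t. mink (?g t) (?g t)) has_real_derivative 2 * mink (Df 1 t - Da 1 t) (?g t)) (at t)"
      by (rule mink_deriv[OF gd])
    have const: "mink (?g s) (?g s) = c\<^sup>2" if "s \<in> I" for s
      using env c(2) that unfolding is_envelope_def pseudo_circle_def by auto
    obtain d where d: "d > 0" "ball t d \<subseteq> I" using assms(1) t open_contains_ball by blast
    have "\<forall>y. \<bar>t - y\<bar> < d \<longrightarrow> mink (?g t) (?g t) = mink (?g y) (?g y)"
    proof (intro allI impI)
      fix y assume "\<bar>t - y\<bar> < d"
      then have "y \<in> I" using d(2) by (auto simp: dist_real_def)
      then show "mink (?g t) (?g t) = mink (?g y) (?g y)" using const t by simp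
    qed
    then have e1: "2 * mink (Df 1 t - Da 1 t) (?g t) = 0"
      using DERIV_local_const[OF hd d(1)] by blast
    have e2: "mink (Df 1 t) (?g t) = 0"
      using env t vector_derivative_at[OF fd[OF t]] unfolding is_envelope_def by auto
    have e3: "mink (Da 1 t) (\<nu> t) = 0"
      using assms(3) t vector_derivative_at[OF ad[OF t]] unfolding spacelike_frontal_def by auto
    have e4: "\<nu> t \<in> H1" using assms(3) t unfolding spacelike_frontal_def by auto
    have gpos: "mink (?g t) (?g t) > 0" using const[OF t] c(1) by simp
    have e5: "mink (Da 1 t) (?g t) = 0" using e1 e2 unfolding mink_def by (simp add: algebra_simps)
    have "fst (Da 1 t) = 0 \<and> snd (Da 1 t) = 0"
      apply (rule alg[of "fst (\<nu> t)" "snd (\<nu> t)" "fst (?g t)" "snd (?g t)"])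
      using e3 e4 gpos e5 unfolding mink_def H1_def by auto
    then show ?thesis by (simp add: prod_eq_iff)
  qed
  obtain k where k: "\<And>x. x \<in> I \<Longrightarrow> a x = k"
  proof (rule has_vector_derivative_zero_constant[of I a])
    show "convex I" using assms(2) by (rule is_interval_convex)
    fix x assume "x \<in> I"
    then show "(a has_vector_derivative 0) (at x within I)"
      using ad zero has_vector_derivative_at_within by metis
  qed blast
  then show False using assms(5) by auto
qed

end
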